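(* Let $P:\mathcal C^{op}\to\mathbf{Heyt}$ be a weak hyperdoctrine with full weak comprehensions and comprehensive diagonals, and suppose $\Psi_{\mathcal C}$ is a weak hyperdoctrine. Then for every $\alpha\in P(X\times Y)$ and all $\gamma,\beta\in P(A)$: $\{\forall^P_{pr_1}(\alpha)\}=\forall^{\Psi_{\mathcal C}}_{pr_1}\{\alpha\}$ and $\{\gamma\Rightarrow^P\beta\}=\{\gamma\}\Rightarrow^{\Psi_{\mathcal C}}\{\beta\}$ as elements of $\Psi_{\mathcal C}(X)$, resp. $\Psi_{\mathcal C}(A)$. If moreover the comprehensions are strong (monic) and $\mathrm{Sub}_{\mathcal C}$ is a weak hyperdoctrine, the same equalities hold with $\mathrm{Sub}_{\mathcal C}$ in place of $\Psi_{\mathcal C}$.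
   Context: A weak hyperdoctrine is an elementary doctrine (equality predicates $\delta_A$, written $=_A$) over a weakly cartesian closed base with Heyting fibres and reindexing, and left and right adjoints $\exists_{pr_1},\forall_{pr_1}$ to reindexing along product projections $pr_1:X\times Y\to X$ satisfying Beck–Chevalley. A weak comprehension of $\alpha\in P(A)$ is an arrow $\{\alpha\}:Z\to A$ with $\top\le P_{\{\alpha\}}(\alpha)$ through which every $f$ with $\top\le P_f(\alpha)$ factors (not necessarily uniquely); it is strong if $\{\alpha\}$ is monic; full weak comprehensions: all exist and $\alpha\le\beta$ whenever $\{\alpha\}$ factors through $\{\beta\}$. Comprehensive diagonals: $f=g$ whenever $\top\vdash f(x)=_Yg(x)$. $\Psi_{\mathcal C}$ sends $A$ to the poset reflection of $\mathcal C/A$, reindexing by weak pullback; $\mathrm{Sub}_{\mathcal C}$ is the subobject doctrine. In the equalities, $\{\alpha\}$ denotes the class $[\{\alpha\}]$ in $\Psi_{\mathcal C}$ (resp. the subobject in $\mathrm{Sub}_{\mathcal C}$), and superscripts indicate in which doctrine the operation is computed. *)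

theory Defs
  imports Main
begin

record ('o, 'm) wcat =
  obj  :: "'o set"
  arr  :: "'m set"
  cdom :: "'m \<Rightarrow> 'o"
  ccod :: "'m \<Rightarrow> 'o"
  idt  :: "'o \<Rightarrow> 'm"
  comp :: "'m \<Rightarrow> 'm \<Rightarrow> 'm"      (* comp C g f = g \<circ> f *)
  prd  :: "'o \<Rightarrow> 'o \<Rightarrow> 'o"
  pr1  :: "'o \<Rightarrow> 'o \<Rightarrow> 'm"
  pr2  :: "'o \<Rightarrow> 'o \<Rightarrow> 'm"
  trm  :: "'o"
  exo  :: "'o \<Rightarrow> 'o \<Rightarrow> 'o"
  evl  :: "'o \<Rightarrow> 'o \<Rightarrow> 'm"

definition hom :: "('o,'m,'x) wcat_scheme \<Rightarrow> 'o \<Rightarrow> 'o \<Rightarrow> 'm set" where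
  "hom C A B = {f \<in> arr C. cdom C f = A \<and> ccod C f = B}"

definition category :: "('o,'m,'x) wcat_scheme \<Rightarrow> bool" where
  "category C \<longleftrightarrow>
     (\<forall>f\<in>arr C. cdom C f \<in> obj C \<and> ccod C f \<in> obj C) \<and>
     (\<forall>A\<in>obj C. idt C A \<in> hom C A A) \<and>
     (\<forall>f g. f \<in> arr C \<and> g \<in> arr C \<and> ccod C f = cdom C g
         \<longrightarrow> comp C g f \<in> hom C (cdom C f) (ccod C g)) \<and>
     (\<forall>f\<in>arr C. comp C f (idt C (cdom C f)) = f \<and> comp C (idt C (ccod C f)) f = f) \<and>
     (\<forall>f g h. f \<in> arr C \<and> g \<in> arr C \<and> h \<in> arr C \<and> ccod C f = cdom C g \<and> ccod C g = cdom C h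
         \<longrightarrow> comp C h (comp C g f) = comp C (comp C h g) f)"

definition has_products :: "('o,'m,'x) wcat_scheme \<Rightarrow> bool" where
  "has_products C \<longleftrightarrow>
     trm C \<in> obj C \<and> (\<forall>A\<in>obj C. \<exists>!t. t \<in> hom C A (trm C)) \<and>
     (\<forall>A\<in>obj C. \<forall>B\<in>obj C.
        prd C A B \<in> obj C \<and> pr1 C A B \<in> hom C (prd C A B) A \<and> pr2 C A B \<in> hom C (prd C A B) B \<and>
        (\<forall>Z f g. f \<in> hom C Z A \<and> g \<in> hom C Z B \<longrightarrow>
           (\<exists>!h. h \<in> hom C Z (prd C A B) \<and> comp C (pr1 C A B) h = f \<and> comp C (pr2 C A B) h = g)))"

definition pair :: "('o,'m,'x) wcat_scheme \<Rightarrow> 'm \<Rightarrow> 'm \<Rightarrow> 'm" where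
  "pair C f g = (THE h. h \<in> hom C (cdom C f) (prd C (ccod C f) (ccod C g)) \<and>
        comp C (pr1 C (ccod C f) (ccod C g)) h = f \<and> comp C (pr2 C (ccod C f) (ccod C g)) h = g)"

definition cross :: "('o,'m,'x) wcat_scheme \<Rightarrow> 'm \<Rightarrow> 'm \<Rightarrow> 'm" where
  "cross C f g = pair C (comp C f (pr1 C (cdom C f) (cdom C g))) (comp C g (pr2 C (cdom C f) (cdom C g)))"

definition has_weak_exponentials :: "('o,'m,'x) wcat_scheme \<Rightarrow> bool" where
  "has_weak_exponentials C \<longleftrightarrow>
     (\<forall>B\<in>obj C. \<forall>D\<in>obj C. exo C B D \<in> obj C \<and> evl C B D \<in> hom C (prd C (exo C B D) B) D \<and>
        (\<forall>A f. f \<in> hom C (prd C A B) D \<longrightarrow>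
           (\<exists>h\<in>hom C A (exo C B D). comp C (evl C B D) (cross C h (idt C B)) = f)))"

definition weakly_cc :: "('o,'m,'x) wcat_scheme \<Rightarrow> bool" where
  "weakly_cc C \<longleftrightarrow> category C \<and> has_products C \<and> has_weak_exponentials C"

definition factors :: "('o,'m,'x) wcat_scheme \<Rightarrow> 'm \<Rightarrow> 'm \<Rightarrow> bool" where
  "factors C g f \<longleftrightarrow> (\<exists>h\<in>arr C. cdom C h = cdom C g \<and> ccod C h = cdom C f \<and> comp C f h = g)"

definition monic :: "('o,'m,'x) wcat_scheme \<Rightarrow> 'm \<Rightarrow> bool" where
  "monic C m \<longleftrightarrow> m \<in> arr C \<and>
     (\<forall>f\<in>arr C. \<forall>g\<in>arr C. ccod C f = cdom C m \<and> ccod C g = cdom C m \<and> cdom C f = cdom C g \<and>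
        comp C m f = comp C m g \<longrightarrow> f = g)"

definition is_wpb :: "('o,'m,'x) wcat_scheme \<Rightarrow> 'm \<Rightarrow> 'm \<Rightarrow> 'm \<Rightarrow> 'm \<Rightarrow> bool" where
  "is_wpb C f g p q \<longleftrightarrow>
     f \<in> arr C \<and> g \<in> arr C \<and> ccod C f = ccod C g \<and> p \<in> arr C \<and> q \<in> arr C \<and>
     cdom C p = cdom C q \<and> ccod C p = cdom C f \<and> ccod C q = cdom C g \<and> comp C f p = comp C g q \<and>
     (\<forall>p' q'. p' \<in> arr C \<and> q' \<in> arr C \<and> cdom C p' = cdom C q' \<and> ccod C p' = cdom C f \<and>
        ccod C q' = cdom C g \<and> comp C f p' = comp C g q' \<longrightarrow>
        (\<exists>h\<in>arr C. cdom C h = cdom C p' \<and> ccod C h = cdom C p \<and> comp C p h = p' \<and> comp C q h = q'))"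

definition is_pb :: "('o,'m,'x) wcat_scheme \<Rightarrow> 'm \<Rightarrow> 'm \<Rightarrow> 'm \<Rightarrow> 'm \<Rightarrow> bool" where
  "is_pb C f g p q \<longleftrightarrow>
     f \<in> arr C \<and> g \<in> arr C \<and> ccod C f = ccod C g \<and> p \<in> arr C \<and> q \<in> arr C \<and>
     cdom C p = cdom C q \<and> ccod C p = cdom C f \<and> ccod C q = cdom C g \<and> comp C f p = comp C g q \<and>
     (\<forall>p' q'. p' \<in> arr C \<and> q' \<in> arr C \<and> cdom C p' = cdom C q' \<and> ccod C p' = cdom C f \<and>
        ccod C q' = cdom C g \<and> comp C f p' = comp C g q' \<longrightarrow>
        (\<exists>!h. h \<in> arr C \<and> cdom C h = cdom C p' \<and> ccod C h = cdom C p \<and> comp C p h = p' \<and> comp C q h = q'))"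

definition has_weak_pullbacks :: "('o,'m,'x) wcat_scheme \<Rightarrow> bool" where
  "has_weak_pullbacks C \<longleftrightarrow>
     (\<forall>f\<in>arr C. \<forall>g\<in>arr C. ccod C f = ccod C g \<longrightarrow> (\<exists>p q. is_wpb C f g p q))"

definition has_mono_pullbacks :: "('o,'m,'x) wcat_scheme \<Rightarrow> bool" where
  "has_mono_pullbacks C \<longleftrightarrow>
     (\<forall>f\<in>arr C. \<forall>m. monic C m \<and> ccod C f = ccod C m \<longrightarrow> (\<exists>p q. is_pb C f m p q))"

text \<open>A doctrine: poset fibres \<open>fib A\<close> ordered by \<open>leq A\<close>, reindexing \<open>re f = P_f\<close>.\<close>
record ('o, 'm, 'p) doct =
  fib :: "'o \<Rightarrow> 'p set"
  leq :: "'o \<Rightarrow> 'p \<Rightarrow> 'p \<Rightarrow> bool"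
  re  :: "'m \<Rightarrow> 'p \<Rightarrow> 'p"

record ('o, 'p) hops =
  htop  :: "'o \<Rightarrow> 'p"
  hbot  :: "'o \<Rightarrow> 'p"
  hmeet :: "'o \<Rightarrow> 'p \<Rightarrow> 'p \<Rightarrow> 'p"
  hjoin :: "'o \<Rightarrow> 'p \<Rightarrow> 'p \<Rightarrow> 'p"
  himp  :: "'o \<Rightarrow> 'p \<Rightarrow> 'p \<Rightarrow> 'p"
  hex   :: "'o \<Rightarrow> 'o \<Rightarrow> 'p \<Rightarrow> 'p"   (* hex X Y : P(X\<times>Y) \<rightarrow> P(X), = \<exists>_{pr_1} *)
  hall  :: "'o \<Rightarrow> 'o \<Rightarrow> 'p \<Rightarrow> 'p"   (* hall X Y : P(X\<times>Y) \<rightarrow> P(X), = \<forall>_{pr_1} *)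
  heq   :: "'o \<Rightarrow> 'p"                (* heq A = \<delta>_A \<in> P(A\<times>A) *)

definition doctrine :: "('o,'m,'x) wcat_scheme \<Rightarrow> ('o,'m,'p) doct \<Rightarrow> bool" where
  "doctrine C P \<longleftrightarrow>
     (\<forall>A\<in>obj C.
        (\<forall>a\<in>fib P A. leq P A a a) \<and>
        (\<forall>a\<in>fib P A. \<forall>b\<in>fib P A. leq P A a b \<and> leq P A b a \<longrightarrow> a = b) \<and>
        (\<forall>a\<in>fib P A. \<forall>b\<in>fib P A. \<forall>c\<in>fib P A. leq P A a b \<and> leq P A b c \<longrightarrow> leq P A a c)) \<and>
     (\<forall>f\<in>arr C. \<forall>a\<in>fib P (ccod C f). re P f a \<in> fib P (cdom C f)) \<and>
     (\<forall>f\<in>arr C. \<forall>a\<in>fib P (ccod C f). \<forall>b\<in>fib P (ccod C f).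
        leq P (ccod C f) a b \<longrightarrow> leq P (cdom C f) (re P f a) (re P f b)) \<and>
     (\<forall>A\<in>obj C. \<forall>a\<in>fib P A. re P (idt C A) a = a) \<and>
     (\<forall>f\<in>arr C. \<forall>g\<in>arr C. ccod C f = cdom C g \<longrightarrow>
        (\<forall>a\<in>fib P (ccod C g). re P (comp C g f) a = re P f (re P g a)))"

definition heyting_fibres :: "('o,'m,'x) wcat_scheme \<Rightarrow> ('o,'m,'p) doct \<Rightarrow> ('o,'p) hops \<Rightarrow> bool" where
  "heyting_fibres C P H \<longleftrightarrow>
     (\<forall>A\<in>obj C.
        htop H A \<in> fib P A \<and> hbot H A \<in> fib P A \<and>
        (\<forall>a\<in>fib P A. \<forall>b\<in>fib P A. hmeet H A a b \<in> fib P A \<and> hjoin H A a b \<in> fib P A \<and> himp H A a b \<in> fib P A) \<and>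
        (\<forall>a\<in>fib P A. leq P A a (htop H A) \<and> leq P A (hbot H A) a) \<and>
        (\<forall>a\<in>fib P A. \<forall>b\<in>fib P A. \<forall>c\<in>fib P A.
           (leq P A c (hmeet H A a b) \<longleftrightarrow> leq P A c a \<and> leq P A c b) \<and>
           (leq P A (hjoin H A a b) c \<longleftrightarrow> leq P A a c \<and> leq P A b c) \<and>
           (leq P A c (himp H A a b) \<longleftrightarrow> leq P A (hmeet H A c a) b))) \<and>
     (\<forall>f\<in>arr C.
        re P f (htop H (ccod C f)) = htop H (cdom C f) \<and>
        re P f (hbot H (ccod C f)) = hbot H (cdom C f) \<and>
        (\<forall>a\<in>fib P (ccod C f). \<forall>b\<in>fib P (ccod C f).
           re P f (hmeet H (ccod C f) a b) = hmeet H (cdom C f) (re P f a) (re P f b) \<and>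
           re P f (hjoin H (ccod C f) a b) = hjoin H (cdom C f) (re P f a) (re P f b) \<and>
           re P f (himp H (ccod C f) a b) = himp H (cdom C f) (re P f a) (re P f b)))"

definition has_quantifiers :: "('o,'m,'x) wcat_scheme \<Rightarrow> ('o,'m,'p) doct \<Rightarrow> ('o,'p) hops \<Rightarrow> bool" where
  "has_quantifiers C P H \<longleftrightarrow>
     (\<forall>X\<in>obj C. \<forall>Y\<in>obj C. \<forall>a\<in>fib P (prd C X Y).
        hex H X Y a \<in> fib P X \<and> hall H X Y a \<in> fib P X \<and>
        (\<forall>b\<in>fib P X. leq P X (hex H X Y a) b \<longleftrightarrow> leq P (prd C X Y) a (re P (pr1 C X Y) b)) \<and>
        (\<forall>b\<in>fib P X. leq P X b (hall H X Y a) \<longleftrightarrow> leq P (prd C X Y) (re P (pr1 C X Y) b) a) \<and>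
        (\<forall>f\<in>arr C. ccod C f = X \<longrightarrow>
           re P f (hex H X Y a) = hex H (cdom C f) Y (re P (cross C f (idt C Y)) a) \<and>
           re P f (hall H X Y a) = hall H (cdom C f) Y (re P (cross C f (idt C Y)) a)))"

definition elementary :: "('o,'m,'x) wcat_scheme \<Rightarrow> ('o,'m,'p) doct \<Rightarrow> ('o,'p) hops \<Rightarrow> bool" where
  "elementary C P H \<longleftrightarrow>
     (\<forall>A\<in>obj C.
        heq H A \<in> fib P (prd C A A) \<and>
        leq P A (htop H A) (re P (pair C (idt C A) (idt C A)) (heq H A)) \<and>
        (\<forall>X\<in>obj C. \<forall>a\<in>fib P (prd C X A).
           leq P (prd C (prd C X A) A)
             (hmeet H (prd C (prd C X A) A)
                (re P (pr1 C (prd C X A) A) a)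
                (re P (pair C (comp C (pr2 C X A) (pr1 C (prd C X A) A)) (pr2 C (prd C X A) A)) (heq H A)))
             (re P (pair C (comp C (pr1 C X A) (pr1 C (prd C X A) A)) (pr2 C (prd C X A) A)) a)) \<and>
        (\<forall>B\<in>obj C.
           leq P (prd C (prd C A B) (prd C A B))
             (heq H (prd C A B))
             (hmeet H (prd C (prd C A B) (prd C A B))
                (re P (cross C (pr1 C A B) (pr1 C A B)) (heq H A))
                (re P (cross C (pr2 C A B) (pr2 C A B)) (heq H B)))))"

definition weak_hyperdoctrine :: "('o,'m,'x) wcat_scheme \<Rightarrow> ('o,'m,'p) doct \<Rightarrow> ('o,'p) hops \<Rightarrow> bool" where
  "weak_hyperdoctrine C P H \<longleftrightarrow>
     weakly_cc C \<and> doctrine C P \<and> heyting_fibres C P H \<and> has_quantifiers C P H \<and> elementary C P H"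

definition is_wcomp :: "('o,'m,'x) wcat_scheme \<Rightarrow> ('o,'m,'p) doct \<Rightarrow> ('o,'p) hops \<Rightarrow> 'o \<Rightarrow> 'p \<Rightarrow> 'm \<Rightarrow> bool" where
  "is_wcomp C P H A a c \<longleftrightarrow>
     c \<in> arr C \<and> ccod C c = A \<and> leq P (cdom C c) (htop H (cdom C c)) (re P c a) \<and>
     (\<forall>f\<in>arr C. ccod C f = A \<and> leq P (cdom C f) (htop H (cdom C f)) (re P f a) \<longrightarrow> factors C f c)"

definition full_weak_comprehensions :: "('o,'m,'x) wcat_scheme \<Rightarrow> ('o,'m,'p) doct \<Rightarrow> ('o,'p) hops \<Rightarrow> bool" where
  "full_weak_comprehensions C P H \<longleftrightarrow>
     (\<forall>A\<in>obj C. \<forall>a\<in>fib P A. \<exists>c. is_wcomp C P H A a c) \<and>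
     (\<forall>A\<in>obj C. \<forall>a\<in>fib P A. \<forall>b\<in>fib P A. \<forall>c d.
        is_wcomp C P H A a c \<and> is_wcomp C P H A b d \<and> factors C c d \<longrightarrow> leq P A a b)"

definition strong_comprehensions :: "('o,'m,'x) wcat_scheme \<Rightarrow> ('o,'m,'p) doct \<Rightarrow> ('o,'p) hops \<Rightarrow> bool" where
  "strong_comprehensions C P H \<longleftrightarrow>
     (\<forall>A\<in>obj C. \<forall>a\<in>fib P A. \<exists>c. is_wcomp C P H A a c \<and> monic C c)"

definition comprehensive_diagonals :: "('o,'m,'x) wcat_scheme \<Rightarrow> ('o,'m,'p) doct \<Rightarrow> ('o,'p) hops \<Rightarrow> bool" where
  "comprehensive_diagonals C P H \<longleftrightarrow>
     (\<forall>A Y f g. f \<in> hom C A Y \<and> g \<in> hom C A Y \<and>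
        leq P A (htop H A) (re P (pair C f g) (heq H Y)) \<longrightarrow> f = g)"

text \<open>Class of \<open>f\<close> in the poset reflection of \<open>C/A\<close>.\<close>
definition cls :: "('o,'m,'x) wcat_scheme \<Rightarrow> 'o \<Rightarrow> 'm \<Rightarrow> 'm set" where
  "cls C A f = {g \<in> arr C. ccod C g = A \<and> factors C g f \<and> factors C f g}"

definition Psi :: "('o,'m,'x) wcat_scheme \<Rightarrow> ('o,'m,'m set) doct" where
  "Psi C = \<lparr> fib = (\<lambda>A. {cls C A f | f. f \<in> arr C \<and> ccod C f = A}),
             leq = (\<lambda>A u v. \<exists>f g. f \<in> arr C \<and> g \<in> arr C \<and> ccod C f = A \<and> ccod C g = A \<and>
                        u = cls C A f \<and> v = cls C A g \<and> factors C f g),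
             re = (\<lambda>f u. cls C (cdom C f) (SOME p. \<exists>g q. g \<in> u \<and> is_wpb C f g p q)) \<rparr>"

text \<open>Subobject of a mono \<open>m\<close>: its class of monos under mutual factorisation (= isomorphism in \<open>C/A\<close>).\<close>
definition msub :: "('o,'m,'x) wcat_scheme \<Rightarrow> 'o \<Rightarrow> 'm \<Rightarrow> 'm set" where
  "msub C A m = {n. monic C n \<and> ccod C n = A \<and> factors C n m \<and> factors C m n}"

definition Sub :: "('o,'m,'x) wcat_scheme \<Rightarrow> ('o,'m,'m set) doct" where
  "Sub C = \<lparr> fib = (\<lambda>A. {msub C A m | m. monic C m \<and> ccod C m = A}),
             leq = (\<lambda>A u v. \<exists>m n. monic C m \<and> monic C n \<and> ccod C m = A \<and> ccod C n = A \<and>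
                        u = msub C A m \<and> v = msub C A n \<and> factors C m n),
             re = (\<lambda>f u. msub C (cdom C f) (SOME p. \<exists>m q. m \<in> u \<and> is_pb C f m p q)) \<rparr>"

end

theory Submission
  imports Defs
begin


lemma cat_obj: "category C \<Longrightarrow> f \<in> arr C \<Longrightarrow> cdom C f \<in> obj C \<and> ccod C f \<in> obj C"
  unfolding category_def by blast

lemma cat_comp: "category C \<Longrightarrow> f \<in> arr C \<Longrightarrow> g \<in> arr C \<Longrightarrow> ccod C f = cdom C g \<Longrightarrow>
   comp C g f \<in> arr C \<and> cdom C (comp C g f) = cdom C f \<and> ccod C (comp C g f) = ccod C g"
  unfolding category_def hom_def by blast

lemma cat_id: "category C \<Longrightarrow> A \<in> obj C \<Longrightarrow> idt C A \<in> arr C \<and> cdom C (idt C A) = A \<and> ccod C (idt C A) = A"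
  unfolding category_def hom_def by blast

lemma cat_idr: "category C \<Longrightarrow> f \<in> arr C \<Longrightarrow> comp C f (idt C (cdom C f)) = f"
  unfolding category_def by blast

lemma cat_assoc: "category C \<Longrightarrow> f \<in> arr C \<Longrightarrow> g \<in> arr C \<Longrightarrow> h \<in> arr C \<Longrightarrow> ccod C f = cdom C g \<Longrightarrow> ccod C g = cdom C h
   \<Longrightarrow> comp C h (comp C g f) = comp C (comp C h g) f"
  unfolding category_def by blast

lemma factors_refl: "category C \<Longrightarrow> f \<in> arr C \<Longrightarrow> factors C f f"
  unfolding factors_def using cat_id cat_idr cat_obj by metis

lemma factors_arr: "category C \<Longrightarrow> factors C f g \<Longrightarrow> g \<in> arr C \<Longrightarrow> f \<in> arr C"
  unfolding factors_def using cat_comp by metis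

lemma factors_trans: "category C \<Longrightarrow> factors C f g \<Longrightarrow> factors C g h \<Longrightarrow> h \<in> arr C \<Longrightarrow> factors C f h"
proof -
  assume cat: "category C" and fg: "factors C f g" and gh: "factors C g h" and h: "h \<in> arr C"
  from fg obtain k where k: "k \<in> arr C" "cdom C k = cdom C f" "ccod C k = cdom C g" "comp C g k = f"
    unfolding factors_def by blast
  from gh obtain l where l: "l \<in> arr C" "cdom C l = cdom C g" "ccod C l = cdom C h" "comp C h l = g"
    unfolding factors_def by blast
  have lk: "comp C l k \<in> arr C \<and> cdom C (comp C l k) = cdom C k \<and> ccod C (comp C l k) = ccod C l"
    using cat_comp[OF cat k(1) l(1)] k l by simp
  have "comp C h (comp C l k) = comp C (comp C h l) k"
    using cat_assoc[OF cat k(1) l(1) h] k l by simp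
  then show ?thesis unfolding factors_def using lk k l by metis
qed

lemma factors_comp: "category C \<Longrightarrow> f \<in> arr C \<Longrightarrow> k \<in> arr C \<Longrightarrow> ccod C k = cdom C f \<Longrightarrow> factors C (comp C f k) f"
  unfolding factors_def using cat_comp by metis

lemma pair_prop:
  assumes "has_products C" "A \<in> obj C" "B \<in> obj C" "f \<in> hom C Z A" "g \<in> hom C Z B"
  shows "pair C f g \<in> hom C Z (prd C A B) \<and> comp C (pr1 C A B) (pair C f g) = f \<and> comp C (pr2 C A B) (pair C f g) = g"
proof -
  have fd: "cdom C f = Z" "ccod C f = A" "ccod C g = B" using assms(4,5) unfolding hom_def by auto
  have "\<exists>!h. h \<in> hom C Z (prd C A B) \<and> comp C (pr1 C A B) h = f \<and> comp C (pr2 C A B) h = g"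
    using assms unfolding has_products_def by blast
  from theI'[OF this] show ?thesis unfolding pair_def fd .
qed

lemma prod_facts: "has_products C \<Longrightarrow> A \<in> obj C \<Longrightarrow> B \<in> obj C \<Longrightarrow>
  prd C A B \<in> obj C \<and> pr1 C A B \<in> hom C (prd C A B) A \<and> pr2 C A B \<in> hom C (prd C A B) B"
  unfolding has_products_def by blast

lemma cross_prop:
  assumes cat: "category C" and pr: "has_products C" and f: "f \<in> arr C" and Y: "Y \<in> obj C"
  shows "cross C f (idt C Y) \<in> hom C (prd C (cdom C f) Y) (prd C (ccod C f) Y) \<and>
     comp C (pr1 C (ccod C f) Y) (cross C f (idt C Y)) = comp C f (pr1 C (cdom C f) Y)"
proof -
  let ?Z = "cdom C f" and ?X = "ccod C f"
  have Z: "?Z \<in> obj C" and X: "?X \<in> obj C" using cat_obj[OF cat f] by auto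
  have i: "idt C Y \<in> arr C" "cdom C (idt C Y) = Y" "ccod C (idt C Y) = Y" using cat_id[OF cat Y] by auto
  have p: "prd C ?Z Y \<in> obj C" "pr1 C ?Z Y \<in> hom C (prd C ?Z Y) ?Z" "pr2 C ?Z Y \<in> hom C (prd C ?Z Y) Y"
    using prod_facts[OF pr Z Y] by auto
  have a1: "comp C f (pr1 C ?Z Y) \<in> hom C (prd C ?Z Y) ?X"
    using cat_comp[OF cat _ f, of "pr1 C ?Z Y"] p unfolding hom_def by auto
  have a2: "comp C (idt C Y) (pr2 C ?Z Y) \<in> hom C (prd C ?Z Y) Y"
    using cat_comp[OF cat _ i(1), of "pr2 C ?Z Y"] p i unfolding hom_def by auto
  show ?thesis unfolding cross_def i(2) using pair_prop[OF pr X Y a1 a2] by blast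
qed



lemma whd: "weak_hyperdoctrine C Q HQ \<Longrightarrow> category C \<and> has_products C \<and> doctrine C Q \<and> heyting_fibres C Q HQ \<and> has_quantifiers C Q HQ"
  unfolding weak_hyperdoctrine_def weakly_cc_def by blast

lemma d_refl: "doctrine C Q \<Longrightarrow> A \<in> obj C \<Longrightarrow> a \<in> fib Q A \<Longrightarrow> leq Q A a a"
  unfolding doctrine_def by blast
lemma d_anti: "doctrine C Q \<Longrightarrow> A \<in> obj C \<Longrightarrow> a \<in> fib Q A \<Longrightarrow> b \<in> fib Q A \<Longrightarrow> leq Q A a b \<Longrightarrow> leq Q A b a \<Longrightarrow> a = b"
  unfolding doctrine_def by blast
lemma d_trans: "doctrine C Q \<Longrightarrow> A \<in> obj C \<Longrightarrow> a \<in> fib Q A \<Longrightarrow> b \<in> fib Q A \<Longrightarrow> c \<in> fib Q A \<Longrightarrow> leq Q A a b \<Longrightarrow> leq Q A b c \<Longrightarrow> leq Q A a c"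
  unfolding doctrine_def by blast
lemma d_re: "doctrine C Q \<Longrightarrow> f \<in> arr C \<Longrightarrow> a \<in> fib Q (ccod C f) \<Longrightarrow> re Q f a \<in> fib Q (cdom C f)"
  unfolding doctrine_def by blast
lemma d_mono: "doctrine C Q \<Longrightarrow> f \<in> arr C \<Longrightarrow> a \<in> fib Q (ccod C f) \<Longrightarrow> b \<in> fib Q (ccod C f) \<Longrightarrow> leq Q (ccod C f) a b \<Longrightarrow> leq Q (cdom C f) (re Q f a) (re Q f b)"
  unfolding doctrine_def by blast
lemma d_comp: "doctrine C Q \<Longrightarrow> f \<in> arr C \<Longrightarrow> g \<in> arr C \<Longrightarrow> ccod C f = cdom C g \<Longrightarrow> a \<in> fib Q (ccod C g) \<Longrightarrow> re Q (comp C g f) a = re Q f (re Q g a)"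
  unfolding doctrine_def by blast

lemma h_top: "heyting_fibres C Q HQ \<Longrightarrow> A \<in> obj C \<Longrightarrow> htop HQ A \<in> fib Q A"
  unfolding heyting_fibres_def by blast
lemma h_ops: "heyting_fibres C Q HQ \<Longrightarrow> A \<in> obj C \<Longrightarrow> a \<in> fib Q A \<Longrightarrow> b \<in> fib Q A \<Longrightarrow> hmeet HQ A a b \<in> fib Q A \<and> himp HQ A a b \<in> fib Q A"
  unfolding heyting_fibres_def by blast
lemma h_letop: "heyting_fibres C Q HQ \<Longrightarrow> A \<in> obj C \<Longrightarrow> a \<in> fib Q A \<Longrightarrow> leq Q A a (htop HQ A)"
  unfolding heyting_fibres_def by blast
lemma h_meet: "heyting_fibres C Q HQ \<Longrightarrow> A \<in> obj C \<Longrightarrow> a \<in> fib Q A \<Longrightarrow> b \<in> fib Q A \<Longrightarrow> c \<in> fib Q A \<Longrightarrow>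
   leq Q A c (hmeet HQ A a b) \<longleftrightarrow> leq Q A c a \<and> leq Q A c b"
  unfolding heyting_fibres_def by blast
lemma h_imp: "heyting_fibres C Q HQ \<Longrightarrow> A \<in> obj C \<Longrightarrow> a \<in> fib Q A \<Longrightarrow> b \<in> fib Q A \<Longrightarrow> c \<in> fib Q A \<Longrightarrow>
   leq Q A c (himp HQ A a b) \<longleftrightarrow> leq Q A (hmeet HQ A c a) b"
  unfolding heyting_fibres_def by blast
lemma h_retop: "heyting_fibres C Q HQ \<Longrightarrow> f \<in> arr C \<Longrightarrow> re Q f (htop HQ (ccod C f)) = htop HQ (cdom C f)"
  unfolding heyting_fibres_def by blast
lemma h_remeet: "heyting_fibres C Q HQ \<Longrightarrow> f \<in> arr C \<Longrightarrow> a \<in> fib Q (ccod C f) \<Longrightarrow> b \<in> fib Q (ccod C f) \<Longrightarrow>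
  re Q f (hmeet HQ (ccod C f) a b) = hmeet HQ (cdom C f) (re Q f a) (re Q f b)"
  unfolding heyting_fibres_def by blast
lemma h_reimp: "heyting_fibres C Q HQ \<Longrightarrow> f \<in> arr C \<Longrightarrow> a \<in> fib Q (ccod C f) \<Longrightarrow> b \<in> fib Q (ccod C f) \<Longrightarrow>
  re Q f (himp HQ (ccod C f) a b) = himp HQ (cdom C f) (re Q f a) (re Q f b)"
  unfolding heyting_fibres_def by blast

lemma q_fib: "has_quantifiers C Q HQ \<Longrightarrow> X \<in> obj C \<Longrightarrow> Y \<in> obj C \<Longrightarrow> a \<in> fib Q (prd C X Y) \<Longrightarrow> hall HQ X Y a \<in> fib Q X"
  unfolding has_quantifiers_def by blast
lemma q_all: "has_quantifiers C Q HQ \<Longrightarrow> X \<in> obj C \<Longrightarrow> Y \<in> obj C \<Longrightarrow> a \<in> fib Q (prd C X Y) \<Longrightarrow> b \<in> fib Q X \<Longrightarrow>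
   leq Q X b (hall HQ X Y a) \<longleftrightarrow> leq Q (prd C X Y) (re Q (pr1 C X Y) b) a"
  unfolding has_quantifiers_def by blast
lemma q_bc: "has_quantifiers C Q HQ \<Longrightarrow> X \<in> obj C \<Longrightarrow> Y \<in> obj C \<Longrightarrow> a \<in> fib Q (prd C X Y) \<Longrightarrow> f \<in> arr C \<Longrightarrow> ccod C f = X \<Longrightarrow>
   re Q f (hall HQ X Y a) = hall HQ (cdom C f) Y (re Q (cross C f (idt C Y)) a)"
  unfolding has_quantifiers_def by blast

lemma wcomp_facts: "is_wcomp C P H A a c \<Longrightarrow> c \<in> arr C \<and> ccod C c = A \<and> leq P (cdom C c) (htop H (cdom C c)) (re P c a)"
  unfolding is_wcomp_def by blast
lemma wcomp_fact: "is_wcomp C P H A a c \<Longrightarrow> f \<in> arr C \<Longrightarrow> ccod C f = A \<Longrightarrow> leq P (cdom C f) (htop H (cdom C f)) (re P f a) \<Longrightarrow> factors C f c"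
  unfolding is_wcomp_def by blast

lemma top_factor:
  assumes hP: "weak_hyperdoctrine C P H" and w: "is_wcomp C P H A a c" and a: "a \<in> fib P A" and fc: "factors C f c"
  shows "leq P (cdom C f) (htop H (cdom C f)) (re P f a)"
proof -
  have cat: "category C" and dP: "doctrine C P" and hf: "heyting_fibres C P H" using whd[OF hP] by auto
  have c: "c \<in> arr C" "ccod C c = A" "leq P (cdom C c) (htop H (cdom C c)) (re P c a)" using wcomp_facts[OF w] by auto
  obtain h where h: "h \<in> arr C" "cdom C h = cdom C f" "ccod C h = cdom C c" "comp C c h = f"
    using fc unfolding factors_def by blast
  have ob: "cdom C c \<in> obj C" "A \<in> obj C" using cat_obj[OF cat c(1)] c by auto
  have t: "htop H (cdom C c) \<in> fib P (cdom C c)" using h_top[OF hf ob(1)] .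
  have rc: "re P c a \<in> fib P (cdom C c)" using d_re[OF dP c(1)] a c by simp
  have "leq P (cdom C h) (re P h (htop H (cdom C c))) (re P h (re P c a))"
    using d_mono[OF dP h(1)] t rc c h by simp
  moreover have "re P h (htop H (cdom C c)) = htop H (cdom C h)" using h_retop[OF hf h(1)] h by simp
  moreover have "re P f a = re P h (re P c a)" using d_comp[OF dP h(1) c(1)] h c a by simp
  ultimately show ?thesis using h by simp
qed



locale gen =
  fixes C :: "('o,'m) wcat" and P :: "('o,'m,'p) doct" and H :: "('o,'p) hops"
    and D :: "('o,'m,'q) doct" and HD :: "('o,'q) hops" and Rep :: "'m \<Rightarrow> bool" and cl :: "'o \<Rightarrow> 'm \<Rightarrow> 'q"
  assumes hP: "weak_hyperdoctrine C P H"
    and full: "full_weak_comprehensions C P H"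
    and hD: "weak_hyperdoctrine C D HD"
    and rep_arr: "Rep f \<Longrightarrow> f \<in> arr C"
    and rep_comp: "Rep f \<Longrightarrow> Rep g \<Longrightarrow> ccod C g = cdom C f \<Longrightarrow> Rep (comp C f g)"
    and rep_compr: "A \<in> obj C \<Longrightarrow> a \<in> fib P A \<Longrightarrow> \<exists>c. is_wcomp C P H A a c \<and> Rep c"
    and F1: "Rep f \<Longrightarrow> Rep g \<Longrightarrow> ccod C f = A \<Longrightarrow> ccod C g = A \<Longrightarrow> leq D A (cl A f) (cl A g) \<longleftrightarrow> factors C f g"
    and F2: "A \<in> obj C \<Longrightarrow> u \<in> fib D A \<Longrightarrow> \<exists>f. Rep f \<and> ccod C f = A \<and> u = cl A f"
    and F2': "Rep f \<Longrightarrow> cl (ccod C f) f \<in> fib D (ccod C f)"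
    and F4: "h \<in> arr C \<Longrightarrow> Rep f \<Longrightarrow> ccod C f = ccod C h \<Longrightarrow>
       \<exists>p q g. Rep p \<and> re D h (cl (ccod C h) f) = cl (cdom C h) p \<and> is_wpb C h g p q \<and> factors C g f \<and> factors C f g"
begin

lemma basics: "category C" "has_products C" "doctrine C P" "heyting_fibres C P H" "has_quantifiers C P H"
  "doctrine C D" "heyting_fibres C D HD" "has_quantifiers C D HD"
  using whd[OF hP] whd[OF hD] by auto

lemma all_eq:
  assumes X: "X \<in> obj C" and Y: "Y \<in> obj C" and a: "a \<in> fib P (prd C X Y)"
    and wc: "is_wcomp C P H X (hall H X Y a) c" and Rc: "Rep c"
    and wd: "is_wcomp C P H (prd C X Y) a d" and Rd: "Rep d"
  shows "cl X c = hall HD X Y (cl (prd C X Y) d)"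
proof -
  note b = basics
  have XY: "prd C X Y \<in> obj C" and pr1: "pr1 C X Y \<in> arr C" "cdom C (pr1 C X Y) = prd C X Y" "ccod C (pr1 C X Y) = X"
    using prod_facts[OF b(2) X Y] unfolding hom_def by auto
  have c: "c \<in> arr C" "ccod C c = X" using wcomp_facts[OF wc] by auto
  have d: "d \<in> arr C" "ccod C d = prd C X Y" using wcomp_facts[OF wd] by auto
  have alla: "hall H X Y a \<in> fib P X" using q_fib[OF b(5) X Y a] .
  define u where "u = cl (prd C X Y) d"
  have u: "u \<in> fib D (prd C X Y)" using F2'[OF Rd] d unfolding u_def by simp
  define V where "V = hall HD X Y u"
  have V: "V \<in> fib D X" using q_fib[OF b(8) X Y u] unfolding V_def .
  have clc: "cl X c \<in> fib D X" using F2'[OF Rc] c by simp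
  have counit: "leq P (prd C X Y) (re P (pr1 C X Y) (hall H X Y a)) a"
    using q_all[OF b(5) X Y a alla] d_refl[OF b(3) X alla] by simp
  have 1: "leq D X (cl X c) V"
  proof -
    obtain p q g where p: "Rep p" "re D (pr1 C X Y) (cl X c) = cl (prd C X Y) p"
        and w: "is_wpb C (pr1 C X Y) g p q" and gc: "factors C g c"
      using F4[OF pr1(1) Rc] c pr1 by auto
    have pq: "p \<in> arr C" "q \<in> arr C" "cdom C p = cdom C q" "ccod C p = prd C X Y" "ccod C q = cdom C g"
      "comp C (pr1 C X Y) p = comp C g q" "g \<in> arr C" "ccod C g = X"
      using w pr1 unfolding is_wpb_def by auto
    have "factors C (comp C g q) g" using factors_comp[OF b(1) pq(7) pq(2) pq(5)] .
    then have gqc: "factors C (comp C g q) c" using factors_trans[OF b(1) _ gc c(1)] by blast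
    have W: "cdom C (comp C g q) = cdom C p" using cat_comp[OF b(1) pq(2) pq(7) pq(5)] pq by simp
    have t1: "leq P (cdom C p) (htop H (cdom C p)) (re P (comp C g q) (hall H X Y a))"
      using top_factor[OF hP wc alla gqc] W by simp
    have e: "re P (comp C g q) (hall H X Y a) = re P p (re P (pr1 C X Y) (hall H X Y a))"
      using pq(6)[symmetric] d_comp[OF b(3) pq(1) pr1(1)] pq pr1 alla by simp
    have rr: "re P (pr1 C X Y) (hall H X Y a) \<in> fib P (prd C X Y)" using d_re[OF b(3) pr1(1)] pr1 alla by simp
    have m: "leq P (cdom C p) (re P p (re P (pr1 C X Y) (hall H X Y a))) (re P p a)"
      using d_mono[OF b(3) pq(1)] pq rr a counit by simp
    have Wo: "cdom C p \<in> obj C" using cat_obj[OF b(1) pq(1)] by simp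
    have "leq P (cdom C p) (htop H (cdom C p)) (re P p a)"
      using d_trans[OF b(3) Wo h_top[OF b(4) Wo] _ _ t1[unfolded e] m] d_re[OF b(3) pq(1)] pq rr a by simp
    then have "factors C p d" using wcomp_fact[OF wd pq(1) pq(4)] by simp
    then have "leq D (prd C X Y) (cl (prd C X Y) p) u" unfolding u_def using F1[OF p(1) Rd pq(4) d(2)] by simp
    then show ?thesis unfolding V_def using q_all[OF b(8) X Y u clc] p(2) by simp
  qed
  have 2: "leq D X V (cl X c)"
  proof -
    obtain f where f: "Rep f" "ccod C f = X" "V = cl X f" using F2[OF X V] by blast
    have fa: "f \<in> arr C" using rep_arr[OF f(1)] .
    define Z where "Z = cdom C f"
    have Z: "Z \<in> obj C" using cat_obj[OF b(1) fa] Z_def by simp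
    have "leq D (prd C X Y) (re D (pr1 C X Y) V) u"
      using q_all[OF b(8) X Y u V] d_refl[OF b(6) X V] V_def by simp
    obtain p q g where p: "Rep p" "re D (pr1 C X Y) (cl X f) = cl (prd C X Y) p"
        and w: "is_wpb C (pr1 C X Y) g p q" and fg: "factors C f g"
      using F4[OF pr1(1) f(1)] f pr1 by auto
    have pq: "p \<in> arr C" "ccod C p = prd C X Y" "g \<in> arr C" "ccod C g = X"
      using w pr1 unfolding is_wpb_def by auto
    have "leq D (prd C X Y) (cl (prd C X Y) p) u"
      using \<open>leq D (prd C X Y) (re D (pr1 C X Y) V) u\<close> p(2) f(3) by simp
    then have pd: "factors C p d" unfolding u_def using F1[OF p(1) Rd pq(2) d(2)] by simp
    obtain k where k: "k \<in> arr C" "cdom C k = Z" "ccod C k = cdom C g" "comp C g k = f"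
      using fg unfolding factors_def Z_def by blast
    define fx where "fx = cross C f (idt C Y)"
    have fx: "fx \<in> arr C" "cdom C fx = prd C Z Y" "ccod C fx = prd C X Y" "comp C (pr1 C X Y) fx = comp C f (pr1 C Z Y)"
      using cross_prop[OF b(1,2) fa Y] f(2) unfolding fx_def Z_def hom_def by auto
    have ZY: "prd C Z Y \<in> obj C" "pr1 C Z Y \<in> arr C" "cdom C (pr1 C Z Y) = prd C Z Y" "ccod C (pr1 C Z Y) = Z"
      using prod_facts[OF b(2) Z Y] unfolding hom_def by auto
    define q' where "q' = comp C k (pr1 C Z Y)"
    have q': "q' \<in> arr C" "cdom C q' = prd C Z Y" "ccod C q' = cdom C g"
      using cat_comp[OF b(1) ZY(2) k(1)] ZY k unfolding q'_def by auto
    have "comp C g q' = comp C f (pr1 C Z Y)"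
      using cat_assoc[OF b(1) ZY(2) k(1) pq(3)] ZY k unfolding q'_def by simp
    then have eq: "comp C (pr1 C X Y) fx = comp C g q'" using fx(4) by simp
    obtain h where h: "h \<in> arr C" "cdom C h = cdom C fx" "ccod C h = cdom C p" "comp C p h = fx"
      using w fx q' eq pr1 pq unfolding is_wpb_def by (smt (verit))
    have "factors C fx p" unfolding factors_def using h by blast
    then have fxd: "factors C fx d" using factors_trans[OF b(1) _ pd d(1)] by blast
    have t: "leq P (prd C Z Y) (htop H (prd C Z Y)) (re P fx a)"
      using top_factor[OF hP wd a fxd] fx by simp
    have rfx: "re P fx a \<in> fib P (prd C Z Y)" using d_re[OF b(3) fx(1)] fx a by simp
    have "re P (pr1 C Z Y) (htop H Z) = htop H (prd C Z Y)" using h_retop[OF b(4) ZY(2)] ZY by simp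
    then have "leq P Z (htop H Z) (hall H Z Y (re P fx a))"
      using q_all[OF b(5) Z Y rfx h_top[OF b(4) Z]] t by simp
    moreover have "re P f (hall H X Y a) = hall H Z Y (re P fx a)"
      using q_bc[OF b(5) X Y a fa f(2)] unfolding fx_def Z_def by simp
    ultimately have "leq P Z (htop H Z) (re P f (hall H X Y a))" by simp
    then have "factors C f c" using wcomp_fact[OF wc fa f(2)] Z_def by simp
    then show ?thesis using F1[OF f(1) Rc f(2) c(2)] f(3) by simp
  qed
  show ?thesis using d_anti[OF b(6) X clc V 1 2] unfolding V_def u_def .
qed

end


context gen begin

lemma imp_eq:
  assumes A: "A \<in> obj C" and g: "g \<in> fib P A" and bb: "b \<in> fib P A"
    and wc: "is_wcomp C P H A (himp H A g b) c" and Rc: "Rep c"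
    and wd: "is_wcomp C P H A g d" and Rd: "Rep d"
    and we: "is_wcomp C P H A b e" and Re: "Rep e"
  shows "cl A c = himp HD A (cl A d) (cl A e)"
proof -
  note B = basics
  have c: "c \<in> arr C" "ccod C c = A" using wcomp_facts[OF wc] by auto
  have d: "d \<in> arr C" "ccod C d = A" using wcomp_facts[OF wd] by auto
  have e: "e \<in> arr C" "ccod C e = A" using wcomp_facts[OF we] by auto
  have gb: "himp H A g b \<in> fib P A" using h_ops[OF B(4) A g bb] by simp
  have clc: "cl A c \<in> fib D A" using F2'[OF Rc] c by simp
  have U: "cl A d \<in> fib D A" using F2'[OF Rd] d by simp
  have W: "cl A e \<in> fib D A" using F2'[OF Re] e by simp
  define I where "I = himp HD A (cl A d) (cl A e)"
  have I: "I \<in> fib D A" using h_ops[OF B(7) A U W] I_def by simp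
  have 1: "leq D A (cl A c) I"
  proof -
    define M where "M = hmeet HD A (cl A c) (cl A d)"
    have M: "M \<in> fib D A" using h_ops[OF B(7) A clc U] M_def by simp
    obtain m where m: "Rep m" "ccod C m = A" "M = cl A m" using F2[OF A M] by blast
    have ma: "m \<in> arr C" using rep_arr[OF m(1)] .
    have "leq D A M (cl A c) \<and> leq D A M (cl A d)"
      using h_meet[OF B(7) A clc U M] d_refl[OF B(6) A M] M_def by simp
    then have mc: "factors C m c" and md: "factors C m d"
      using F1[OF m(1) Rc m(2) c(2)] F1[OF m(1) Rd m(2) d(2)] m(3) by auto
    define Z where "Z = cdom C m"
    have Z: "Z \<in> obj C" using cat_obj[OF B(1) ma] Z_def by simp
    have t1: "leq P Z (htop H Z) (re P m (himp H A g b))" using top_factor[OF hP wc gb mc] Z_def by simp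
    have t2: "leq P Z (htop H Z) (re P m g)" using top_factor[OF hP wd g md] Z_def by simp
    have rg: "re P m g \<in> fib P Z" and rb: "re P m b \<in> fib P Z"
      using d_re[OF B(3) ma] m g bb Z_def by auto
    have tZ: "htop H Z \<in> fib P Z" using h_top[OF B(4) Z] .
    have "re P m (himp H A g b) = himp H Z (re P m g) (re P m b)"
      using h_reimp[OF B(4) ma] m g bb Z_def by simp
    then have "leq P Z (hmeet H Z (htop H Z) (re P m g)) (re P m b)"
      using t1 h_imp[OF B(4) Z rg rb tZ] by simp
    moreover have "leq P Z (htop H Z) (hmeet H Z (htop H Z) (re P m g))"
      using h_meet[OF B(4) Z tZ rg tZ] d_refl[OF B(3) Z tZ] t2 by simp
    ultimately have "leq P Z (htop H Z) (re P m b)"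
      using d_trans[OF B(3) Z tZ _ rb] h_ops[OF B(4) Z tZ rg] by blast
    then have "factors C m e" using wcomp_fact[OF we ma m(2)] Z_def by simp
    then have "leq D A M (cl A e)" using F1[OF m(1) Re m(2) e(2)] m(3) by simp
    then show ?thesis unfolding I_def using h_imp[OF B(7) A U W clc] M_def by simp
  qed
  have 2: "leq D A I (cl A c)"
  proof -
    obtain f where f: "Rep f" "ccod C f = A" "I = cl A f" using F2[OF A I] by blast
    have fa: "f \<in> arr C" using rep_arr[OF f(1)] .
    define Z where "Z = cdom C f"
    have Z: "Z \<in> obj C" using cat_obj[OF B(1) fa] Z_def by simp
    define M where "M = hmeet HD A I (cl A d)"
    have M: "M \<in> fib D A" using h_ops[OF B(7) A I U] M_def by simp
    have MW: "leq D A M (cl A e)"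
      using h_imp[OF B(7) A U W I] d_refl[OF B(6) A I] M_def I_def by simp
    define G where "G = re P f g"
    define Bf where "Bf = re P f b"
    have G: "G \<in> fib P Z" and Bf: "Bf \<in> fib P Z" using d_re[OF B(3) fa] f g bb Z_def G_def Bf_def by auto
    have tZ: "htop H Z \<in> fib P Z" using h_top[OF B(4) Z] .
    define T where "T = hmeet H Z (htop H Z) G"
    have T: "T \<in> fib P Z" using h_ops[OF B(4) Z tZ G] T_def by simp
    have TG: "leq P Z T G" using h_meet[OF B(4) Z tZ G T] d_refl[OF B(3) Z T] T_def by simp
    obtain k where wk: "is_wcomp C P H Z T k" and Rk: "Rep k" using rep_compr[OF Z T] by blast
    obtain k' where wk': "is_wcomp C P H Z Bf k'" using full Z Bf unfolding full_weak_comprehensions_def by blast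
    have k: "k \<in> arr C" "ccod C k = Z" using wcomp_facts[OF wk] by auto
    have ktop: "leq P (cdom C k) (htop H (cdom C k)) (re P k T)" using wcomp_facts[OF wk] by simp
    define fk where "fk = comp C f k"
    have fk: "fk \<in> arr C" "cdom C fk = cdom C k" "ccod C fk = A" "Rep fk"
      using cat_comp[OF B(1) k(1) fa] rep_comp[OF f(1) Rk] k f Z_def fk_def by auto
    have K: "cdom C k \<in> obj C" using cat_obj[OF B(1) k(1)] by simp
    have tK: "htop H (cdom C k) \<in> fib P (cdom C k)" using h_top[OF B(4) K] .
    have rkT: "re P k T \<in> fib P (cdom C k)" and rkG: "re P k G \<in> fib P (cdom C k)"
      using d_re[OF B(3) k(1)] k T G by auto
    have "leq P (cdom C k) (re P k T) (re P k G)" using d_mono[OF B(3) k(1)] k T G TG by simp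
    then have "leq P (cdom C k) (htop H (cdom C k)) (re P k G)"
      using d_trans[OF B(3) K tK rkT rkG ktop] by simp
    moreover have "re P fk g = re P k G" using d_comp[OF B(3) k(1) fa] k f g Z_def G_def fk_def by simp
    ultimately have "factors C fk d" using wcomp_fact[OF wd fk(1) fk(3)] fk by simp
    then have "leq D A (cl A fk) (cl A d)" using F1[OF fk(4) Rd fk(3) d(2)] by simp
    moreover have "leq D A (cl A fk) I"
      using F1[OF fk(4) f(1) fk(3) f(2)] factors_comp[OF B(1) fa k(1)] k Z_def f(3) fk_def by simp
    moreover have clfk: "cl A fk \<in> fib D A" using F2'[OF fk(4)] fk by simp
    ultimately have "leq D A (cl A fk) M" using h_meet[OF B(7) A I U clfk] M_def by simp
    then have "leq D A (cl A fk) (cl A e)" using d_trans[OF B(6) A clfk M W _ MW] by simp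
    then have "factors C fk e" using F1[OF fk(4) Re fk(3) e(2)] by simp
    then have "leq P (cdom C k) (htop H (cdom C k)) (re P fk b)" using top_factor[OF hP we bb, of fk] fk by simp
    moreover have "re P fk b = re P k Bf" using d_comp[OF B(3) k(1) fa] k f bb Z_def Bf_def fk_def by simp
    ultimately have "factors C k k'" using wcomp_fact[OF wk' k(1) k(2)] by simp
    then have TB: "leq P Z T Bf" using full Z T Bf wk wk' unfolding full_weak_comprehensions_def by blast
    have "leq P Z (htop H Z) (himp H Z G Bf)" using h_imp[OF B(4) Z G Bf tZ] TB T_def by simp
    moreover have "re P f (himp H A g b) = himp H Z G Bf"
      using h_reimp[OF B(4) fa] f g bb Z_def G_def Bf_def by simp
    ultimately have "factors C f c" using wcomp_fact[OF wc fa f(2)] Z_def by simp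
    then show ?thesis using F1[OF f(1) Rc f(2) c(2)] f(3) by simp
  qed
  show ?thesis using d_anti[OF B(6) A clc I 1 2] I_def by simp
qed

end


lemma cls_self: "category C \<Longrightarrow> f \<in> arr C \<Longrightarrow> f \<in> cls C (ccod C f) f"
  unfolding cls_def using factors_refl[of C f] by simp

lemma psi_F1:
  assumes cat: "category C" and f: "f \<in> arr C" and g: "g \<in> arr C" and fA: "ccod C f = A" and gA: "ccod C g = A"
  shows "leq (Psi C) A (cls C A f) (cls C A g) \<longleftrightarrow> factors C f g"
proof
  assume "leq (Psi C) A (cls C A f) (cls C A g)"
  then obtain f' g' where fg: "f' \<in> arr C" "g' \<in> arr C" "ccod C f' = A" "ccod C g' = A"
     "cls C A f = cls C A f'" "cls C A g = cls C A g'" "factors C f' g'" unfolding Psi_def by simp blast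
  have "f \<in> cls C A f'" using cls_self[OF cat f] fA fg(5) by simp
  then have 1: "factors C f f'" unfolding cls_def by blast
  have "g' \<in> cls C A g" using cls_self[OF cat fg(2)] fg(4,6) by simp
  then have 2: "factors C g' g" unfolding cls_def by blast
  show "factors C f g" using factors_trans[OF cat factors_trans[OF cat 1 fg(7) fg(2)] 2 g] .
next
  assume "factors C f g" then show "leq (Psi C) A (cls C A f) (cls C A g)"
    apply (simp add: Psi_def) using f g fA gA by blast
qed

lemma psi_F4:
  assumes cat: "category C" and wp: "has_weak_pullbacks C" and h: "h \<in> arr C" and f: "f \<in> arr C" and fh: "ccod C f = ccod C h"
  shows "\<exists>p q g. p \<in> arr C \<and> re (Psi C) h (cls C (ccod C h) f) = cls C (cdom C h) p \<and> is_wpb C h g p q \<and> factors C g f \<and> factors C f g"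
proof -
  have ex: "\<exists>p g q. g \<in> cls C (ccod C h) f \<and> is_wpb C h g p q"
  proof -
    obtain p q where "is_wpb C h f p q" using wp h f fh[symmetric] unfolding has_weak_pullbacks_def by blast
    then show ?thesis using cls_self[OF cat f] fh by metis
  qed
  define p where "p = (SOME p. \<exists>g q. g \<in> cls C (ccod C h) f \<and> is_wpb C h g p q)"
  have "\<exists>g q. g \<in> cls C (ccod C h) f \<and> is_wpb C h g p q" unfolding p_def using someI_ex[OF ex] .
  then obtain g q where gq: "g \<in> cls C (ccod C h) f" "is_wpb C h g p q" by blast
  have "re (Psi C) h (cls C (ccod C h) f) = cls C (cdom C h) p" unfolding Psi_def p_def by simp
  moreover have "p \<in> arr C" using gq(2) unfolding is_wpb_def by blast
  moreover have "factors C g f" "factors C f g" using gq(1) unfolding cls_def by auto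
  ultimately show ?thesis using gq(2) by blast
qed

lemma gen_Psi:
  assumes "weak_hyperdoctrine C P H" "full_weak_comprehensions C P H" "weak_hyperdoctrine C (Psi C) HPsi"
    "has_weak_pullbacks C"
  shows "gen C P H (Psi C) HPsi (\<lambda>f. f \<in> arr C) (cls C)"
proof -
  have cat: "category C" using whd[OF assms(1)] by simp
  show ?thesis
  proof (unfold_locales)
    show "weak_hyperdoctrine C P H" "full_weak_comprehensions C P H" "weak_hyperdoctrine C (Psi C) HPsi"
      using assms by auto
  next
    fix f g assume "f \<in> arr C" "g \<in> arr C" "ccod C g = cdom C f" then show "comp C f g \<in> arr C" using cat_comp[OF cat] by blast
  next
    fix A a assume A: "A \<in> obj C" "a \<in> fib P A"
    obtain c where "is_wcomp C P H A a c" using assms(2) A unfolding full_weak_comprehensions_def by blast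
    then show "\<exists>c. is_wcomp C P H A a c \<and> c \<in> arr C" using wcomp_facts[of C P H A a c] by blast
  next
    fix f g A assume "f \<in> arr C" "g \<in> arr C" "ccod C f = A" "ccod C g = A"
    then show "leq (Psi C) A (cls C A f) (cls C A g) = factors C f g" using psi_F1[OF cat] by blast
  next
    fix A u assume "A \<in> obj C" "u \<in> fib (Psi C) A" then show "\<exists>f. f \<in> arr C \<and> ccod C f = A \<and> u = cls C A f"
      unfolding Psi_def by auto
  next
    fix f assume "f \<in> arr C" then show "cls C (ccod C f) f \<in> fib (Psi C) (ccod C f)" unfolding Psi_def by auto
  next
    fix h f assume "h \<in> arr C" "f \<in> arr C" "ccod C f = ccod C h"
    then show "\<exists>p q g. p \<in> arr C \<and> re (Psi C) h (cls C (ccod C h) f) = cls C (cdom C h) p \<and> is_wpb C h g p q \<and> factors C g f \<and> factors C f g"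
      using psi_F4[OF cat assms(4)] by blast
  qed
qed



lemma monic_comp:
  assumes cat: "category C" and m: "monic C m" and n: "monic C n" and nm: "ccod C n = cdom C m"
  shows "monic C (comp C m n)"
proof -
  have ma: "m \<in> arr C" and na: "n \<in> arr C" using m n unfolding monic_def by auto
  have mn: "comp C m n \<in> arr C" "cdom C (comp C m n) = cdom C n" "ccod C (comp C m n) = ccod C m"
    using cat_comp[OF cat na ma nm] by auto
  show ?thesis unfolding monic_def
  proof (intro conjI ballI impI)
    show "comp C m n \<in> arr C" using mn by simp
  next
    fix x y assume x: "x \<in> arr C" and y: "y \<in> arr C"
      and h: "ccod C x = cdom C (comp C m n) \<and> ccod C y = cdom C (comp C m n) \<and> cdom C x = cdom C y \<and>
         comp C (comp C m n) x = comp C (comp C m n) y"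
    have xy: "ccod C x = cdom C n" "ccod C y = cdom C n" "cdom C x = cdom C y" using h mn by auto
    have "comp C m (comp C n x) = comp C m (comp C n y)"
      using cat_assoc[OF cat x na ma xy(1) nm] cat_assoc[OF cat y na ma xy(2) nm] h by simp
    moreover have "comp C n x \<in> arr C" "ccod C (comp C n x) = cdom C m" "cdom C (comp C n x) = cdom C x"
      using cat_comp[OF cat x na xy(1)] nm by auto
    moreover have "comp C n y \<in> arr C" "ccod C (comp C n y) = cdom C m" "cdom C (comp C n y) = cdom C y"
      using cat_comp[OF cat y na xy(2)] nm by auto
    ultimately have "comp C n x = comp C n y" using m xy(3) unfolding monic_def by metis
    then show "x = y" using n x y xy unfolding monic_def by metis
  qed
qed

lemma pb_wpb: assumes "is_pb C f g p q" shows "is_wpb C f g p q"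
proof -
  have A: "f \<in> arr C \<and> g \<in> arr C \<and> ccod C f = ccod C g \<and> p \<in> arr C \<and> q \<in> arr C \<and>
     cdom C p = cdom C q \<and> ccod C p = cdom C f \<and> ccod C q = cdom C g \<and> comp C f p = comp C g q"
    using assms unfolding is_pb_def by (elim conjE) simp
  have B: "\<forall>p' q'. p' \<in> arr C \<and> q' \<in> arr C \<and> cdom C p' = cdom C q' \<and> ccod C p' = cdom C f \<and>
        ccod C q' = cdom C g \<and> comp C f p' = comp C g q' \<longrightarrow>
        (\<exists>!h. h \<in> arr C \<and> cdom C h = cdom C p' \<and> ccod C h = cdom C p \<and> comp C p h = p' \<and> comp C q h = q')"
    using assms unfolding is_pb_def by (elim conjE)
  have "\<forall>p' q'. p' \<in> arr C \<and> q' \<in> arr C \<and> cdom C p' = cdom C q' \<and> ccod C p' = cdom C f \<and>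
        ccod C q' = cdom C g \<and> comp C f p' = comp C g q' \<longrightarrow>
        (\<exists>h\<in>arr C. cdom C h = cdom C p' \<and> ccod C h = cdom C p \<and> comp C p h = p' \<and> comp C q h = q')"
  proof (intro allI impI)
    fix p' q' assume "p' \<in> arr C \<and> q' \<in> arr C \<and> cdom C p' = cdom C q' \<and> ccod C p' = cdom C f \<and>
        ccod C q' = cdom C g \<and> comp C f p' = comp C g q'"
    then have "\<exists>!h. h \<in> arr C \<and> cdom C h = cdom C p' \<and> ccod C h = cdom C p \<and> comp C p h = p' \<and> comp C q h = q'"
      using B by blast
    then obtain h where "h \<in> arr C \<and> cdom C h = cdom C p' \<and> ccod C h = cdom C p \<and> comp C p h = p' \<and> comp C q h = q'"
      by (elim ex1E)
    then show "\<exists>h\<in>arr C. cdom C h = cdom C p' \<and> ccod C h = cdom C p \<and> comp C p h = p' \<and> comp C q h = q'" by blast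
  qed
  with A show ?thesis unfolding is_wpb_def by (intro conjI) simp_all
qed

lemma ex1_eq: "\<exists>!k. Q k \<Longrightarrow> Q x \<Longrightarrow> Q y \<Longrightarrow> x = y" by blast

lemma pb_monic:
  assumes cat: "category C" and pb: "is_pb C h m p q" and m: "monic C m"
  shows "monic C p"
proof -
  have P: "h \<in> arr C" "m \<in> arr C" "p \<in> arr C" "q \<in> arr C" "cdom C p = cdom C q" "ccod C p = cdom C h"
    "ccod C q = cdom C m" "comp C h p = comp C m q"
    using pb unfolding is_pb_def by auto
  show ?thesis unfolding monic_def
  proof (intro conjI ballI impI)
    show "p \<in> arr C" using P by simp
  next
    fix x y assume x: "x \<in> arr C" and y: "y \<in> arr C"
      and hh: "ccod C x = cdom C p \<and> ccod C y = cdom C p \<and> cdom C x = cdom C y \<and> comp C p x = comp C p y"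
    have xy: "ccod C x = cdom C p" "ccod C y = cdom C p" "cdom C x = cdom C y" "comp C p x = comp C p y" using hh by auto
    have e1: "comp C h (comp C p x) = comp C m (comp C q x)"
      using cat_assoc[OF cat x P(3) P(1) xy(1) P(6)] cat_assoc[OF cat x P(4) P(2)] xy P by simp
    have e2: "comp C h (comp C p y) = comp C m (comp C q y)"
      using cat_assoc[OF cat y P(3) P(1) xy(2) P(6)] cat_assoc[OF cat y P(4) P(2)] xy P by simp
    have qx: "comp C q x \<in> arr C" "ccod C (comp C q x) = cdom C m" "cdom C (comp C q x) = cdom C x"
      using cat_comp[OF cat x P(4)] xy P by auto
    have qy: "comp C q y \<in> arr C" "ccod C (comp C q y) = cdom C m" "cdom C (comp C q y) = cdom C y"
      using cat_comp[OF cat y P(4)] xy P by auto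
    have qq: "comp C q x = comp C q y" using m qx qy e1 e2 xy unfolding monic_def by metis
    have px: "comp C p x \<in> arr C" "ccod C (comp C p x) = cdom C h" "cdom C (comp C p x) = cdom C x"
      using cat_comp[OF cat x P(3)] xy P by auto
    have B: "\<forall>p' q'. p' \<in> arr C \<and> q' \<in> arr C \<and> cdom C p' = cdom C q' \<and> ccod C p' = cdom C h \<and>
        ccod C q' = cdom C m \<and> comp C h p' = comp C m q' \<longrightarrow>
        (\<exists>!k. k \<in> arr C \<and> cdom C k = cdom C p' \<and> ccod C k = cdom C p \<and> comp C p k = p' \<and> comp C q k = q')"
      using pb unfolding is_pb_def by (elim conjE)
    have cond: "comp C p x \<in> arr C \<and> comp C q x \<in> arr C \<and> cdom C (comp C p x) = cdom C (comp C q x) \<and>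
        ccod C (comp C p x) = cdom C h \<and> ccod C (comp C q x) = cdom C m \<and> comp C h (comp C p x) = comp C m (comp C q x)"
      using px qx e1 by simp
    have uq: "\<exists>!k. k \<in> arr C \<and> cdom C k = cdom C (comp C p x) \<and> ccod C k = cdom C p \<and>
         comp C p k = comp C p x \<and> comp C q k = comp C q x"
      using mp[OF spec[OF spec[OF B, of "comp C p x"], of "comp C q x"] cond] .
    have Qx: "x \<in> arr C \<and> cdom C x = cdom C (comp C p x) \<and> ccod C x = cdom C p \<and>
         comp C p x = comp C p x \<and> comp C q x = comp C q x" using x xy px by simp
    have Qy: "y \<in> arr C \<and> cdom C y = cdom C (comp C p x) \<and> ccod C y = cdom C p \<and>
         comp C p y = comp C p x \<and> comp C q y = comp C q x" using y xy px qq by simp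
    show "x = y" using ex1_eq[OF uq Qx Qy] .
  qed
qed

lemma msub_self: "category C \<Longrightarrow> monic C f \<Longrightarrow> f \<in> msub C (ccod C f) f"
  unfolding msub_def monic_def using factors_refl[of C f] by simp

lemma sub_F1:
  assumes cat: "category C" and f: "monic C f" and g: "monic C g" and fA: "ccod C f = A" and gA: "ccod C g = A"
  shows "leq (Sub C) A (msub C A f) (msub C A g) \<longleftrightarrow> factors C f g"
proof
  assume "leq (Sub C) A (msub C A f) (msub C A g)"
  then obtain f' g' where fg: "monic C f'" "monic C g'" "ccod C f' = A" "ccod C g' = A"
     "msub C A f = msub C A f'" "msub C A g = msub C A g'" "factors C f' g'" unfolding Sub_def by simp blast
  have "f \<in> msub C A f'" using msub_self[OF cat f] fA fg(5) by simp
  then have 1: "factors C f f'" unfolding msub_def by blast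
  have "g' \<in> msub C A g" using msub_self[OF cat fg(2)] fg(4,6) by simp
  then have 2: "factors C g' g" unfolding msub_def by blast
  have ga: "g \<in> arr C" "g' \<in> arr C" using g fg(2) unfolding monic_def by auto
  show "factors C f g" using factors_trans[OF cat factors_trans[OF cat 1 fg(7) ga(2)] 2 ga(1)] .
next
  assume "factors C f g" then show "leq (Sub C) A (msub C A f) (msub C A g)"
    apply (simp add: Sub_def) using f g fA gA by blast
qed

lemma sub_F4:
  assumes cat: "category C" and mp: "has_mono_pullbacks C" and h: "h \<in> arr C" and f: "monic C f" and fh: "ccod C f = ccod C h"
  shows "\<exists>p q g. monic C p \<and> re (Sub C) h (msub C (ccod C h) f) = msub C (cdom C h) p \<and> is_wpb C h g p q \<and> factors C g f \<and> factors C f g"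
proof -
  have ex: "\<exists>p g q. g \<in> msub C (ccod C h) f \<and> is_pb C h g p q"
  proof -
    obtain p q where "is_pb C h f p q" using mp h f fh[symmetric] unfolding has_mono_pullbacks_def by blast
    then show ?thesis using msub_self[OF cat f] fh by metis
  qed
  define p where "p = (SOME p. \<exists>g q. g \<in> msub C (ccod C h) f \<and> is_pb C h g p q)"
  have "\<exists>g q. g \<in> msub C (ccod C h) f \<and> is_pb C h g p q" unfolding p_def using someI_ex[OF ex] .
  then obtain g q where gq: "g \<in> msub C (ccod C h) f" "is_pb C h g p q" by blast
  have "re (Sub C) h (msub C (ccod C h) f) = msub C (cdom C h) p" unfolding Sub_def p_def by simp
  moreover have "monic C g" using gq(1) unfolding msub_def by blast
  moreover have "factors C g f" "factors C f g" using gq(1) unfolding msub_def by auto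
  ultimately show ?thesis using gq(2) pb_monic[OF cat gq(2)] pb_wpb[OF gq(2)] by blast
qed

lemma gen_Sub:
  assumes "weak_hyperdoctrine C P H" "full_weak_comprehensions C P H" "weak_hyperdoctrine C (Sub C) HSub"
    "has_mono_pullbacks C" "strong_comprehensions C P H"
  shows "gen C P H (Sub C) HSub (monic C) (msub C)"
proof -
  have cat: "category C" using whd[OF assms(1)] by simp
  show ?thesis
  proof (unfold_locales)
    show "weak_hyperdoctrine C P H" "full_weak_comprehensions C P H" "weak_hyperdoctrine C (Sub C) HSub"
      using assms by auto
  next
    fix f assume "monic C f" then show "f \<in> arr C" unfolding monic_def by simp
  next
    fix f g assume "monic C f" "monic C g" "ccod C g = cdom C f" then show "monic C (comp C f g)"
      using monic_comp[OF cat] by blast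
  next
    fix A a assume A: "A \<in> obj C" "a \<in> fib P A"
    then show "\<exists>c. is_wcomp C P H A a c \<and> monic C c" using assms(5) unfolding strong_comprehensions_def by blast
  next
    fix f g A assume "monic C f" "monic C g" "ccod C f = A" "ccod C g = A"
    then show "leq (Sub C) A (msub C A f) (msub C A g) = factors C f g" using sub_F1[OF cat] by blast
  next
    fix A u assume "A \<in> obj C" "u \<in> fib (Sub C) A" then show "\<exists>f. monic C f \<and> ccod C f = A \<and> u = msub C A f"
      unfolding Sub_def by auto
  next
    fix f assume "monic C f" then show "msub C (ccod C f) f \<in> fib (Sub C) (ccod C f)" unfolding Sub_def by auto
  next
    fix h f assume "h \<in> arr C" "monic C f" "ccod C f = ccod C h"
    then show "\<exists>p q g. monic C p \<and> re (Sub C) h (msub C (ccod C h) f) = msub C (cdom C h) p \<and> is_wpb C h g p q \<and> factors C g f \<and> factors C f g"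
      using sub_F4[OF cat assms(4)] by blast
  qed
qed


theorem corollary2p5:
  fixes C :: "('o, 'm) wcat" and P :: "('o, 'm, 'p) doct" and H :: "('o, 'p) hops"
    and HPsi :: "('o, 'm set) hops" and HSub :: "('o, 'm set) hops"
  assumes "weak_hyperdoctrine C P H"
    and "full_weak_comprehensions C P H"
    and "comprehensive_diagonals C P H"
    and "has_weak_pullbacks C"
    and "weak_hyperdoctrine C (Psi C) HPsi"
  shows
   "(\<forall>X\<in>obj C. \<forall>Y\<in>obj C. \<forall>a\<in>fib P (prd C X Y). \<forall>c d.
        is_wcomp C P H X (hall H X Y a) c \<and> is_wcomp C P H (prd C X Y) a d \<longrightarrow>
        cls C X c = hall HPsi X Y (cls C (prd C X Y) d)) \<and>
    (\<forall>A\<in>obj C. \<forall>g\<in>fib P A. \<forall>b\<in>fib P A. \<forall>c d e.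
        is_wcomp C P H A (himp H A g b) c \<and> is_wcomp C P H A g d \<and> is_wcomp C P H A b e \<longrightarrow>
        cls C A c = himp HPsi A (cls C A d) (cls C A e)) \<and>
    (strong_comprehensions C P H \<and> has_mono_pullbacks C \<and> weak_hyperdoctrine C (Sub C) HSub \<longrightarrow>
      (\<forall>X\<in>obj C. \<forall>Y\<in>obj C. \<forall>a\<in>fib P (prd C X Y). \<forall>c d.
          is_wcomp C P H X (hall H X Y a) c \<and> monic C c \<and>
          is_wcomp C P H (prd C X Y) a d \<and> monic C d \<longrightarrow>
          msub C X c = hall HSub X Y (msub C (prd C X Y) d)) \<and>
      (\<forall>A\<in>obj C. \<forall>g\<in>fib P A. \<forall>b\<in>fib P A. \<forall>c d e.
          is_wcomp C P H A (himp H A g b) c \<and> monic C c \<and> is_wcomp C P H A g d \<and> monic C d \<and>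
          is_wcomp C P H A b e \<and> monic C e \<longrightarrow>
          msub C A c = himp HSub A (msub C A d) (msub C A e)))" (is "?P1 \<and> ?P2 \<and> ?P3")
proof -
  have gP: "gen C P H (Psi C) HPsi (\<lambda>f. f \<in> arr C) (cls C)" using gen_Psi[OF assms(1,2,5,4)] .
  have I: ?P1
  proof (intro ballI allI impI)
    fix X Y a c d assume X: "X \<in> obj C" and Y: "Y \<in> obj C" and a: "a \<in> fib P (prd C X Y)"
      and w: "is_wcomp C P H X (hall H X Y a) c \<and> is_wcomp C P H (prd C X Y) a d"
    show "cls C X c = hall HPsi X Y (cls C (prd C X Y) d)"
    proof -
      have wc: "is_wcomp C P H X (hall H X Y a) c" and wd: "is_wcomp C P H (prd C X Y) a d" using w by auto
      have Rc: "c \<in> arr C" and Rd: "d \<in> arr C" using wcomp_facts[OF wc] wcomp_facts[OF wd] by auto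
      show ?thesis using gen.all_eq[OF gP X Y a wc Rc wd Rd] .
    qed
  qed
  have II: ?P2
  proof (intro ballI allI impI)
    fix A g b c d e assume A: "A \<in> obj C" and g: "g \<in> fib P A" and b: "b \<in> fib P A"
      and w: "is_wcomp C P H A (himp H A g b) c \<and> is_wcomp C P H A g d \<and> is_wcomp C P H A b e"
    show "cls C A c = himp HPsi A (cls C A d) (cls C A e)"
    proof -
      have wc: "is_wcomp C P H A (himp H A g b) c" and wd: "is_wcomp C P H A g d" and we: "is_wcomp C P H A b e" using w by auto
      have Rc: "c \<in> arr C" and Rd: "d \<in> arr C" and Re: "e \<in> arr C"
        using wcomp_facts[OF wc] wcomp_facts[OF wd] wcomp_facts[OF we] by auto
      show ?thesis using gen.imp_eq[OF gP A g b wc Rc wd Rd we Re] .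
    qed
  qed
  have III: ?P3
  proof (intro impI)
    assume h: "strong_comprehensions C P H \<and> has_mono_pullbacks C \<and> weak_hyperdoctrine C (Sub C) HSub"
    have gS: "gen C P H (Sub C) HSub (monic C) (msub C)" using gen_Sub[OF assms(1,2)] h by blast
    show "(\<forall>X\<in>obj C. \<forall>Y\<in>obj C. \<forall>a\<in>fib P (prd C X Y). \<forall>c d.
          is_wcomp C P H X (hall H X Y a) c \<and> monic C c \<and>
          is_wcomp C P H (prd C X Y) a d \<and> monic C d \<longrightarrow>
          msub C X c = hall HSub X Y (msub C (prd C X Y) d)) \<and>
      (\<forall>A\<in>obj C. \<forall>g\<in>fib P A. \<forall>b\<in>fib P A. \<forall>c d e.
          is_wcomp C P H A (himp H A g b) c \<and> monic C c \<and> is_wcomp C P H A g d \<and> monic C d \<and>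
          is_wcomp C P H A b e \<and> monic C e \<longrightarrow>
          msub C A c = himp HSub A (msub C A d) (msub C A e))"
    proof (intro conjI ballI allI impI)
      fix X Y a c d assume X: "X \<in> obj C" and Y: "Y \<in> obj C" and a: "a \<in> fib P (prd C X Y)"
        and w: "is_wcomp C P H X (hall H X Y a) c \<and> monic C c \<and> is_wcomp C P H (prd C X Y) a d \<and> monic C d"
      show "msub C X c = hall HSub X Y (msub C (prd C X Y) d)"
      proof -
        have wc: "is_wcomp C P H X (hall H X Y a) c" and wd: "is_wcomp C P H (prd C X Y) a d"
          and Rc: "monic C c" and Rd: "monic C d" using w by auto
        show ?thesis using gen.all_eq[OF gS X Y a wc Rc wd Rd] .
      qed
    next
      fix A g b c d e assume A: "A \<in> obj C" and g: "g \<in> fib P A" and b: "b \<in> fib P A"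
        and w: "is_wcomp C P H A (himp H A g b) c \<and> monic C c \<and> is_wcomp C P H A g d \<and> monic C d \<and>
          is_wcomp C P H A b e \<and> monic C e"
      show "msub C A c = himp HSub A (msub C A d) (msub C A e)"
      proof -
        have wc: "is_wcomp C P H A (himp H A g b) c" and wd: "is_wcomp C P H A g d" and we: "is_wcomp C P H A b e"
          and Rc: "monic C c" and Rd: "monic C d" and Re: "monic C e" using w by auto
        show ?thesis using gen.imp_eq[OF gS A g b wc Rc wd Rd we Re] .
      qed
    qed
  qed
  show ?thesis using I II III by (intro conjI)
qed

end
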